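(* Let $F$ be a perfect field of characteristic $p>0$, let $l,m$ be positive integers with $\gcd(l,m)=1$, let $m=ls+k$ and $s=tp+r$ be divisions with remainder with $1\le k<l$ and $0\le r<p$, and let $w\in F[x]$ be monic of degree $s$. Then $$\bigl(p\nmid l \text{ and } kw+lxw'=0\bigr)\iff \bigl(p\mid m \text{ and there exists a monic } u\in F[x] \text{ with } w=x^ru^p\bigr).$$
   Context: $w'$ denotes the formal derivative of $w$. *)

theory Defs
  imports "HOL-Computational_Algebra.Computational_Algebra"
begin

definition perfect_field :: "'a::field itself \<Rightarrow> bool" where
  "perfect_field _ \<longleftrightarrow> CHAR('a) = 0 \<or> surj (\<lambda>x::'a. x ^ CHAR('a))"

end

theory Submission
  imports Defs "HOL-Number_Theory.Cong"
begin

lemma coeff_x_mult: "coeff ([:0, 1:] * (q::'a::comm_semiring_1 poly)) i = (if i = 0 then 0 else coeff q (i - 1))"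
  by (cases i) (simp_all add: coeff_pCons)

lemma coeff_key:
  fixes w :: "'a::field poly"
  shows "coeff (smult (of_nat k) w + smult (of_nat l) ([:0, 1:] * pderiv w)) i
     = of_nat (k + l * i) * coeff w i"
  by (cases i) (simp_all add: coeff_x_mult coeff_pderiv algebra_simps)

lemma x_pow_monom: "([:0, 1:] :: 'a::comm_ring_1 poly) ^ r = monom 1 r"
  by (simp add: monom_altdef)

theorem lemma4p9:
  fixes w :: "'a::field poly" and p l m s k t r :: nat
  assumes "CHAR('a) = p" and "p > 0" and "perfect_field TYPE('a)"
    and "l > 0" and "m > 0" and "coprime l m"
    and "m = l * s + k" and "1 \<le> k" and "k < l"
    and "s = t * p + r" and "r < p"
    and "lead_coeff w = 1" and "degree w = s"
  shows "(\<not> p dvd l \<and> smult (of_nat k) w + smult (of_nat l) ([:0, 1:] * pderiv w) = 0)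
     \<longleftrightarrow> (p dvd m \<and> (\<exists>u :: 'a poly. lead_coeff u = 1 \<and> w = [:0, 1:] ^ r * u ^ p))"
proof -
  have pr: "prime p" using assms(1,2) prime_CHAR_semidom by blast
  have prp: "prime CHAR('a poly)" using pr assms(1) by simp
  have frob: "surj (\<lambda>x::'a. x ^ p)" using assms(1-3) unfolding perfect_field_def by auto
  have ofp0: "of_nat n = (0::'a) \<longleftrightarrow> p dvd n" for n using assms(1) of_nat_eq_0_iff_char_dvd by metis
  show ?thesis
  proof
    assume H: "\<not> p dvd l \<and> smult (of_nat k) w + smult (of_nat l) ([:0, 1:] * pderiv w) = 0"
    have ci: "of_nat (k + l * i) * coeff w i = 0" for i
      using H coeff_key[of k w l i] by simp
    have "of_nat (k + l * s) = (0::'a)" using ci[of s] assms(12,13) by simp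
    hence "p dvd k + l * s" using ofp0 by blast
    hence pm: "p dvd m"
      using assms(7) by (simp add: add.commute)
    have cop: "coprime l p" using H pr by (metis prime_imp_coprime coprime_commute)
    have modr: "i mod p = r" if "coeff w i \<noteq> 0" for i
    proof -
      have "of_nat (k + l * i) = (0::'a)" using ci[of i] that by (simp del: of_nat_add of_nat_mult)
      hence "p dvd k + l * i" using ofp0 by blast
      hence "[k + l * i = 0] (mod p)" by (simp add: cong_0_iff)
      moreover have "[k + l * s = 0] (mod p)" using pm assms(7) by (simp add: cong_0_iff add.commute)
      ultimately have "[k + l * i = k + l * s] (mod p)" by (meson cong_sym cong_trans)
      hence "[i = s] (mod p)" using cop by (simp add: cong_add_lcancel_nat cong_mult_lcancel_nat)
      thus ?thesis using assms(10,11) by (simp add: cong_def)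
    qed
    define c where "c j = (SOME c. c ^ p = coeff w (r + j * p))" for j
    have cp: "c j ^ p = coeff w (r + j * p)" for j
    proof -
      have "\<exists>c. c ^ p = coeff w (r + j * p)"
        using frob unfolding surj_def by metis
      thus ?thesis unfolding c_def by (rule someI_ex)
    qed
    define u where "u = (\<Sum>j\<le>t. monom (c j) j)"
    have cu: "coeff u n = (if n \<le> t then c n else 0)" for n
      unfolding u_def coeff_sum by (simp add: coeff_monom)
    have ct: "c t = 1"
    proof -
      have "c t ^ p = 1" using cp[of t] assms(10,12,13) by (simp add: add.commute)
      have "((c t - 1) + 1) ^ p = (c t - 1) ^ p + 1 ^ p"
        by (rule freshmans_dream) (use pr assms(1) in auto)
      hence "c t ^ p = (c t - 1) ^ p + 1" by simp
      hence "(c t - 1) ^ p = 0" using \<open>c t ^ p = 1\<close> by simp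
      thus ?thesis by simp
    qed
    have du: "degree u = t"
    proof (rule antisym)
      show "degree u \<le> t" by (rule degree_le) (simp add: cu)
      show "t \<le> degree u" by (rule le_degree) (simp add: cu ct)
    qed
    have lu: "lead_coeff u = 1" using du cu ct by simp
    have up: "u ^ p = (\<Sum>j\<le>t. monom (c j ^ p) (j * p))"
    proof -
      have "u ^ p = (\<Sum>j\<le>t. monom (c j) j ^ p)"
        unfolding u_def by (rule freshmans_dream_sum[OF prp]) (simp add: assms(1))
      thus ?thesis by (simp add: monom_power)
    qed
    have "[:0, 1:] ^ r * u ^ p = (\<Sum>j\<le>t. monom (coeff w (r + j * p)) (r + j * p))"
      unfolding up x_pow_monom sum_distrib_left by (simp add: mult_monom cp)
    also have "\<dots> = w"
    proof (rule poly_eqI)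
      fix i
      have "coeff (\<Sum>j\<le>t. monom (coeff w (r + j * p)) (r + j * p)) i
          = (\<Sum>j\<le>t. if r + j * p = i then coeff w i else 0)"
        unfolding coeff_sum by (rule sum.cong) (auto simp: coeff_monom)
      also have "\<dots> = coeff w i"
      proof (cases "coeff w i = 0")
        case True then show ?thesis by (simp add: if_distrib cong: if_cong)
      next
        case False
        have im: "i mod p = r" using modr False .
        have "i \<le> s" using False assms(13) le_degree by blast
        define j0 where "j0 = i div p"
        have ij: "i = r + j0 * p" using im j0_def by (metis add.commute mod_div_mult_eq)
        have "j0 \<le> t"
        proof (rule ccontr)
          assume "\<not> j0 \<le> t" hence "(t+1) * p \<le> j0 * p" by (intro mult_right_mono) auto
          hence "t * p + p \<le> j0 * p" by (simp add: algebra_simps)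
          thus False using \<open>i \<le> s\<close> ij assms(2,10) by linarith
        qed
        have "(\<Sum>j\<le>t. if r + j * p = i then coeff w i else 0)
            = (\<Sum>j\<le>t. if j = j0 then coeff w i else 0)"
          by (rule sum.cong) (use ij assms(2) in simp_all)
        also have "\<dots> = coeff w i" using \<open>j0 \<le> t\<close> by simp
        finally show ?thesis .
      qed
      finally show "coeff (\<Sum>j\<le>t. monom (coeff w (r + j * p)) (r + j * p)) i = coeff w i" .
    qed
    finally show "p dvd m \<and> (\<exists>u :: 'a poly. lead_coeff u = 1 \<and> w = [:0, 1:] ^ r * u ^ p)"
      using pm lu by metis
  next
    assume H: "p dvd m \<and> (\<exists>u :: 'a poly. lead_coeff u = 1 \<and> w = [:0, 1:] ^ r * u ^ p)"
    then obtain u where wu: "w = [:0, 1:] ^ r * u ^ p" by blast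
    have npl: "\<not> p dvd l"
      using H assms(6) pr coprime_common_divisor[of l m p] not_prime_unit by blast
    have ofp: "of_nat p = (0::'a poly)" using assms(1) by (metis of_nat_CHAR semiring_char_poly)
    have dup: "pderiv (u ^ p) = 0" using pderiv_power[of u p] ofp
      by (simp add: of_nat_poly)
    have dx: "[:0, 1:] * pderiv ([:0, 1:] ^ r) = smult (of_nat r) ([:0, 1:] ^ r :: 'a poly)"
    proof (cases r)
      case (Suc n)
      have "pderiv ([:0, 1:] :: 'a poly) = 1" by (simp add: pderiv_pCons one_pCons)
      hence hd: "pderiv ([:0, 1:] ^ r :: 'a poly) = smult (of_nat r) ([:0, 1:] ^ n)"
        using Suc by (simp add: pderiv_power_Suc del: power_Suc)
      show ?thesis unfolding hd mult_smult_right by (simp only: Suc power_Suc)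
    qed simp
    have "[:0, 1:] * pderiv w = smult (of_nat r) w"
    proof -
      have "[:0, 1:] * pderiv w = u ^ p * ([:0, 1:] * pderiv ([:0, 1:] ^ r))"
        unfolding wu pderiv_mult dup by (simp only: mult_zero_left mult_zero_right add_0_left ac_simps)
      also have "\<dots> = smult (of_nat r) w" unfolding dx wu by (simp only: mult_smult_right ac_simps)
      finally show ?thesis .
    qed
    hence "smult (of_nat k) w + smult (of_nat l) ([:0, 1:] * pderiv w) = smult (of_nat (k + l * r)) w"
      by (simp add: smult_add_left)
    moreover have "p dvd k + l * r"
    proof -
      have "m = (k + l * r) + p * (l * t)" using assms(7,10) by (simp add: algebra_simps)
      thus ?thesis using H by (metis dvd_add_left_iff dvd_triv_left)
    qed
    moreover have "of_nat (k + l * r) = (0::'a)" using ofp0 calculation(2) by blast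
    ultimately show "\<not> p dvd l \<and> smult (of_nat k) w + smult (of_nat l) ([:0, 1:] * pderiv w) = 0"
      using npl by (simp only: smult_0_left) simp
  qed
qed

end
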